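(* Let $G$ be a graph and $k$ an integer, and assume: (A) $G$ contains no two adjacent vertices $u,w$ with $N(w)\subseteq N[u]$; and (B) there is no vertex $w$ of $G$ together with a partition $(C_1,C_2)$ of $N(w)$ such that $|C_1|\ge|C_2|$, $C_1$ and $C_2$ are cliques, and every vertex $c_1\in C_1$ lies in exactly one pair $\{c_1,c_2\}$ with $c_2\in C_2$ and $\{c_1,c_2\}\notin E(G)$. Let $v$ be a vertex of degree four such that $G[N(v)]$ has at least three edges. Then $G[N(v)]$ is a path. Moreover, writing $N(v)=\{a,b,c,d\}$ so that $G[N(v)]$ is the path $a-b-c-d$, let $G'$ be the graph with vertex set $V(G)\setminus\{v\}$ whose edge set consists of the edges of $G-v$ together with the set $F$ consisting of all pairs of distinct vertices of $N(v)$, all pairs $\{x,y\}$ with $x\in\{a,b\}$ and $y\in N(d)$, and all pairs $\{x,y\}$ with $x\in\{c,d\}$ and $y\in N(a)$ (pairs containing $v$ being omitted). Then $G$ has a vertex cover of size $k$ if and only if $G'$ has a vertex cover of size $k$.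
   Context: All graphs are finite, simple, undirected. $N(x)$ is the open and $N[x]=N(x)\cup\{x\}$ the closed neighborhood; $G[X]$ is the subgraph induced by $X$. A clique is a set of pairwise adjacent vertices. A vertex cover is a set of vertices containing at least one endpoint of every edge; "has a vertex cover of size $k$" means has a vertex cover of size at most $k$. *)

theory Defs
  imports Main
begin

definition graph :: "'a set \<Rightarrow> ('a \<Rightarrow> 'a \<Rightarrow> bool) \<Rightarrow> bool" where
  "graph V E \<longleftrightarrow> finite V \<and> (\<forall>x y. E x y \<longrightarrow> x \<in> V \<and> y \<in> V)
     \<and> (\<forall>x y. E x y \<longrightarrow> E y x) \<and> (\<forall>x. \<not> E x x)"

definition nbhd :: "('a \<Rightarrow> 'a \<Rightarrow> bool) \<Rightarrow> 'a \<Rightarrow> 'a set" where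
  "nbhd E x = {y. E x y}"

definition cnbhd :: "('a \<Rightarrow> 'a \<Rightarrow> bool) \<Rightarrow> 'a \<Rightarrow> 'a set" where
  "cnbhd E x = insert x (nbhd E x)"

definition is_clique :: "('a \<Rightarrow> 'a \<Rightarrow> bool) \<Rightarrow> 'a set \<Rightarrow> bool" where
  "is_clique E C \<longleftrightarrow> (\<forall>x\<in>C. \<forall>y\<in>C. x \<noteq> y \<longrightarrow> E x y)"

definition vertex_cover :: "'a set \<Rightarrow> ('a \<Rightarrow> 'a \<Rightarrow> bool) \<Rightarrow> 'a set \<Rightarrow> bool" where
  "vertex_cover V E C \<longleftrightarrow> C \<subseteq> V \<and> (\<forall>x y. E x y \<longrightarrow> x \<in> C \<or> y \<in> C)"

definition has_vc :: "'a set \<Rightarrow> ('a \<Rightarrow> 'a \<Rightarrow> bool) \<Rightarrow> int \<Rightarrow> bool" where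
  "has_vc V E k \<longleftrightarrow> (\<exists>C. vertex_cover V E C \<and> int (card C) \<le> k)"

definition induced_edges :: "('a \<Rightarrow> 'a \<Rightarrow> bool) \<Rightarrow> 'a set \<Rightarrow> 'a set set" where
  "induced_edges E X = {{x, y} | x y. x \<in> X \<and> y \<in> X \<and> E x y}"

definition cond_A :: "('a \<Rightarrow> 'a \<Rightarrow> bool) \<Rightarrow> bool" where
  "cond_A E \<longleftrightarrow> \<not> (\<exists>u w. E u w \<and> nbhd E w \<subseteq> cnbhd E u)"

definition cond_B :: "'a set \<Rightarrow> ('a \<Rightarrow> 'a \<Rightarrow> bool) \<Rightarrow> bool" where
  "cond_B V E \<longleftrightarrow> \<not> (\<exists>w C1 C2. w \<in> V \<and> C1 \<union> C2 = nbhd E w \<and> C1 \<inter> C2 = {}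
      \<and> card C1 \<ge> card C2 \<and> is_clique E C1 \<and> is_clique E C2
      \<and> (\<forall>c1\<in>C1. \<exists>!c2. c2 \<in> C2 \<and> \<not> E c1 c2))"

definition nbhd_path :: "('a \<Rightarrow> 'a \<Rightarrow> bool) \<Rightarrow> 'a \<Rightarrow> 'a \<Rightarrow> 'a \<Rightarrow> 'a \<Rightarrow> 'a \<Rightarrow> bool" where
  "nbhd_path E v a b c d \<longleftrightarrow> distinct [a, b, c, d] \<and> nbhd E v = {a, b, c, d}
     \<and> E a b \<and> E b c \<and> E c d \<and> \<not> E a c \<and> \<not> E a d \<and> \<not> E b d"

text \<open>The set F of new pairs (as an oriented relation; symmetrised in reduced_edges).\<close>
definition new_pairs :: "('a \<Rightarrow> 'a \<Rightarrow> bool) \<Rightarrow> 'a \<Rightarrow> 'a \<Rightarrow> 'a \<Rightarrow> 'a \<Rightarrow> 'a \<Rightarrow> 'a \<Rightarrow> 'a \<Rightarrow> bool" where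
  "new_pairs E v a b c d x y \<longleftrightarrow> x \<noteq> y \<and>
     ((x \<in> nbhd E v \<and> y \<in> nbhd E v)
      \<or> (x \<in> {a, b} \<and> y \<in> nbhd E d)
      \<or> (x \<in> {c, d} \<and> y \<in> nbhd E a))"

definition reduced_edges :: "('a \<Rightarrow> 'a \<Rightarrow> bool) \<Rightarrow> 'a \<Rightarrow> 'a \<Rightarrow> 'a \<Rightarrow> 'a \<Rightarrow> 'a \<Rightarrow> 'a \<Rightarrow> 'a \<Rightarrow> bool" where
  "reduced_edges E v a b c d x y \<longleftrightarrow> x \<noteq> v \<and> y \<noteq> v \<and>
     (E x y \<or> new_pairs E v a b c d x y \<or> new_pairs E v a b c d y x)"

end

theory Submission
  imports Defs
begin


lemma mem_if1: "z \<in> (if b then {e} else {}) \<longleftrightarrow> b \<and> z = e" by simp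

lemma induced4:
  assumes sym: "\<forall>x y. E x y \<longrightarrow> E y x" and irr: "\<forall>x. \<not> E x x"
  shows "induced_edges E {p,q,r,s} =
     (if E p q then {{p,q}} else {}) \<union> (if E p r then {{p,r}} else {}) \<union>
     (if E p s then {{p,s}} else {}) \<union> (if E q r then {{q,r}} else {}) \<union>
     (if E q s then {{q,s}} else {}) \<union> (if E r s then {{r,s}} else {})"
proof -
  have e: "E q p = E p q" "E r p = E p r" "E s p = E p s" "E r q = E q r" "E s q = E q s" "E s r = E r s"
    using sym by blast+
  show ?thesis
    unfolding induced_edges_def
  proof (rule set_eqI, rule iffI)
    fix z assume "z \<in> {{x, y} |x y. x \<in> {p, q, r, s} \<and> y \<in> {p, q, r, s} \<and> E x y}"
    then obtain x y where z: "z = {x,y}" and x: "x \<in> {p,q,r,s}" and y: "y \<in> {p,q,r,s}" and xy: "E x y" by blast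
    show "z \<in> (if E p q then {{p,q}} else {}) \<union> (if E p r then {{p,r}} else {}) \<union>
     (if E p s then {{p,s}} else {}) \<union> (if E q r then {{q,r}} else {}) \<union>
     (if E q s then {{q,s}} else {}) \<union> (if E r s then {{r,s}} else {})"
      unfolding Un_iff mem_if1 z using x y xy irr
      by (elim insertE emptyE; simp only: e insert_commute; simp)
  next
    fix z assume "z \<in> (if E p q then {{p,q}} else {}) \<union> (if E p r then {{p,r}} else {}) \<union>
     (if E p s then {{p,s}} else {}) \<union> (if E q r then {{q,r}} else {}) \<union>
     (if E q s then {{q,s}} else {}) \<union> (if E r s then {{r,s}} else {})"
    then show "z \<in> {{x, y} |x y. x \<in> {p, q, r, s} \<and> y \<in> {p, q, r, s} \<and> E x y}"
      unfolding Un_iff mem_if1 by blast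
  qed
qed

lemma four_cases:
  assumes sym: "\<forall>x y. E x y \<longrightarrow> E y x" and irr: "\<forall>x. \<not> E x x"
    and dist: "distinct [p,q,r,s]"
    and A1: "\<not> (E p q \<and> E p r \<and> E p s)"
    and A2: "\<not> (E q p \<and> E q r \<and> E q s)"
    and A3: "\<not> (E r p \<and> E r q \<and> E r s)"
    and A4: "\<not> (E s p \<and> E s q \<and> E s r)"
    and C1: "\<not> (E p q \<and> E r s \<and> \<not> E p r \<and> E p s \<and> E q r \<and> \<not> E q s)"
    and C2: "\<not> (E p r \<and> E q s \<and> \<not> E p q \<and> E p s \<and> E r q \<and> \<not> E r s)"
    and C3: "\<not> (E p q \<and> E s r \<and> \<not> E p s \<and> E p r \<and> E q s \<and> \<not> E q r)"
    and T1: "\<not> (E p q \<and> E q r \<and> E p r \<and> \<not> E p s \<and> \<not> E q s \<and> \<not> E r s)"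
    and T2: "\<not> (E p q \<and> E q s \<and> E p s \<and> \<not> E p r \<and> \<not> E q r \<and> \<not> E s r)"
    and T3: "\<not> (E p r \<and> E r s \<and> E p s \<and> \<not> E p q \<and> \<not> E r q \<and> \<not> E s q)"
    and T4: "\<not> (E q r \<and> E r s \<and> E q s \<and> \<not> E q p \<and> \<not> E r p \<and> \<not> E s p)"
    and card3: "card (induced_edges E {p,q,r,s}) \<ge> 3"
  shows "(E p q \<and> E q r \<and> E r s \<and> \<not> E p r \<and> \<not> E p s \<and> \<not> E q s) \<or>
    (E p q \<and> E q s \<and> E s r \<and> \<not> E p s \<and> \<not> E p r \<and> \<not> E q r) \<or>
    (E p r \<and> E r q \<and> E q s \<and> \<not> E p q \<and> \<not> E p s \<and> \<not> E r s) \<or>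
    (E p r \<and> E r s \<and> E s q \<and> \<not> E p s \<and> \<not> E p q \<and> \<not> E r q) \<or>
    (E p s \<and> E s q \<and> E q r \<and> \<not> E p q \<and> \<not> E p r \<and> \<not> E s r) \<or>
    (E p s \<and> E s r \<and> E r q \<and> \<not> E p r \<and> \<not> E p q \<and> \<not> E s q) \<or>
    (E q p \<and> E p r \<and> E r s \<and> \<not> E q r \<and> \<not> E q s \<and> \<not> E p s) \<or>
    (E q p \<and> E p s \<and> E s r \<and> \<not> E q s \<and> \<not> E q r \<and> \<not> E p r) \<or>
    (E q r \<and> E r p \<and> E p s \<and> \<not> E q p \<and> \<not> E q s \<and> \<not> E r s) \<or>
    (E q r \<and> E r s \<and> E s p \<and> \<not> E q s \<and> \<not> E q p \<and> \<not> E r p) \<or>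
    (E q s \<and> E s p \<and> E p r \<and> \<not> E q p \<and> \<not> E q r \<and> \<not> E s r) \<or>
    (E q s \<and> E s r \<and> E r p \<and> \<not> E q r \<and> \<not> E q p \<and> \<not> E s p) \<or>
    (E r p \<and> E p q \<and> E q s \<and> \<not> E r q \<and> \<not> E r s \<and> \<not> E p s) \<or>
    (E r p \<and> E p s \<and> E s q \<and> \<not> E r s \<and> \<not> E r q \<and> \<not> E p q) \<or>
    (E r q \<and> E q p \<and> E p s \<and> \<not> E r p \<and> \<not> E r s \<and> \<not> E q s) \<or>
    (E r q \<and> E q s \<and> E s p \<and> \<not> E r s \<and> \<not> E r p \<and> \<not> E q p) \<or>
    (E r s \<and> E s p \<and> E p q \<and> \<not> E r p \<and> \<not> E r q \<and> \<not> E s q) \<or>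
    (E r s \<and> E s q \<and> E q p \<and> \<not> E r q \<and> \<not> E r p \<and> \<not> E s p) \<or>
    (E s p \<and> E p q \<and> E q r \<and> \<not> E s q \<and> \<not> E s r \<and> \<not> E p r) \<or>
    (E s p \<and> E p r \<and> E r q \<and> \<not> E s r \<and> \<not> E s q \<and> \<not> E p q) \<or>
    (E s q \<and> E q p \<and> E p r \<and> \<not> E s p \<and> \<not> E s r \<and> \<not> E q r) \<or>
    (E s q \<and> E q r \<and> E r p \<and> \<not> E s r \<and> \<not> E s p \<and> \<not> E q p) \<or>
    (E s r \<and> E r p \<and> E p q \<and> \<not> E s p \<and> \<not> E s q \<and> \<not> E r q) \<or>
    (E s r \<and> E r q \<and> E q p \<and> \<not> E s q \<and> \<not> E s p \<and> \<not> E r p)"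
proof -
  have e: "E q p = E p q" "E r p = E p r" "E s p = E p s" "E r q = E q r" "E s q = E q s" "E s r = E r s"
    using sym by blast+
  let ?f = "\<lambda>b. if b then 1 else (0::nat)"
  have cu: "card (A \<union> B \<union> C \<union> D \<union> F \<union> G) \<le> card A + card B + card C + card D + card F + card G"
    for A B C D F G :: "'a set set"
    using card_Un_le[of "A \<union> B \<union> C \<union> D \<union> F" G] card_Un_le[of "A \<union> B \<union> C \<union> D" F]
      card_Un_le[of "A \<union> B \<union> C" D] card_Un_le[of "A \<union> B" C] card_Un_le[of A B] by linarith
  have ci: "card (if b then {x} else {}) = ?f b" for b and x :: "'a set" by simp
  have "card (induced_edges E {p,q,r,s}) \<le> ?f (E p q) + ?f (E p r) + ?f (E p s) + ?f (E q r) + ?f (E q s) + ?f (E r s)"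
    unfolding induced4[OF sym irr] by (rule order_trans[OF cu], simp only: ci)
  with card3 have cnt: "3 \<le> ?f (E p q) + ?f (E p r) + ?f (E p s) + ?f (E q r) + ?f (E q s) + ?f (E r s)" by linarith
  show ?thesis
    using A1 A2 A3 A4 C1 C2 C3 T1 T2 T3 T4 cnt unfolding e
    by (cases "E p q"; cases "E p r"; cases "E p s"; cases "E q r"; cases "E q s"; cases "E r s";
        simp)
qed


lemma notB_C4:
  assumes "w \<in> V" "nbhd E w = {x1,x2,y1,y2}" "distinct [x1,x2,y1,y2]"
    and sym: "\<forall>x y. E x y \<longrightarrow> E y x"
    and "E x1 x2" "E y1 y2" "\<not> E x1 y1" "E x1 y2" "E x2 y1" "\<not> E x2 y2"
  shows "\<not> cond_B V E"
proof -
  have 1: "{x1,x2} \<union> {y1,y2} = nbhd E w" unfolding assms(2) by auto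
  have 2: "{x1,x2} \<inter> {y1,y2} = {}" using assms(3) by simp
  have 3: "card {x1,x2} \<ge> card {y1,y2}" using assms(3) by simp
  have 4: "is_clique E {x1,x2}" "is_clique E {y1,y2}"
    unfolding is_clique_def using sym assms(5,6) by blast+
  have 5: "\<exists>!c2. c2 \<in> {y1,y2} \<and> \<not> E x1 c2"
    by (rule ex1I[of _ y1]) (use assms(7,8) in blast)+
  have 6: "\<exists>!c2. c2 \<in> {y1,y2} \<and> \<not> E x2 c2"
    by (rule ex1I[of _ y2]) (use assms(9,10) in blast)+
  have "\<forall>c1\<in>{x1,x2}. \<exists>!c2. c2 \<in> {y1,y2} \<and> \<not> E c1 c2" using 5 6 by blast
  then show ?thesis unfolding cond_B_def using assms(1) 1 2 3 4 by blast
qed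

lemma notB_T:
  assumes "w \<in> V" "nbhd E w = {x,y,z,t}" "distinct [x,y,z,t]"
    and sym: "\<forall>x y. E x y \<longrightarrow> E y x"
    and "E x y" "E y z" "E x z" "\<not> E x t" "\<not> E y t" "\<not> E z t"
  shows "\<not> cond_B V E"
proof -
  have 1: "{x,y,z} \<union> {t} = nbhd E w" unfolding assms(2) by auto
  have 2: "{x,y,z} \<inter> {t} = {}" using assms(3) by simp
  have 3: "card {x,y,z} \<ge> card {t}" using assms(3) by simp
  have 4: "is_clique E {x,y,z}" "is_clique E {t}"
    unfolding is_clique_def using sym assms(5,6,7) by blast+
  have "\<forall>c1\<in>{x,y,z}. \<exists>!c2. c2 \<in> {t} \<and> \<not> E c1 c2" using assms(8,9,10) by blast
  then show ?thesis unfolding cond_B_def using assms(1) 1 2 3 4 by blast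
qed

lemma disj_ex:
  assumes "(E p q \<and> E q r \<and> E r s \<and> \<not> E p r \<and> \<not> E p s \<and> \<not> E q s) \<or>
    (E p q \<and> E q s \<and> E s r \<and> \<not> E p s \<and> \<not> E p r \<and> \<not> E q r) \<or>
    (E p r \<and> E r q \<and> E q s \<and> \<not> E p q \<and> \<not> E p s \<and> \<not> E r s) \<or>
    (E p r \<and> E r s \<and> E s q \<and> \<not> E p s \<and> \<not> E p q \<and> \<not> E r q) \<or>
    (E p s \<and> E s q \<and> E q r \<and> \<not> E p q \<and> \<not> E p r \<and> \<not> E s r) \<or>
    (E p s \<and> E s r \<and> E r q \<and> \<not> E p r \<and> \<not> E p q \<and> \<not> E s q) \<or>
    (E q p \<and> E p r \<and> E r s \<and> \<not> E q r \<and> \<not> E q s \<and> \<not> E p s) \<or>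
    (E q p \<and> E p s \<and> E s r \<and> \<not> E q s \<and> \<not> E q r \<and> \<not> E p r) \<or>
    (E q r \<and> E r p \<and> E p s \<and> \<not> E q p \<and> \<not> E q s \<and> \<not> E r s) \<or>
    (E q r \<and> E r s \<and> E s p \<and> \<not> E q s \<and> \<not> E q p \<and> \<not> E r p) \<or>
    (E q s \<and> E s p \<and> E p r \<and> \<not> E q p \<and> \<not> E q r \<and> \<not> E s r) \<or>
    (E q s \<and> E s r \<and> E r p \<and> \<not> E q r \<and> \<not> E q p \<and> \<not> E s p) \<or>
    (E r p \<and> E p q \<and> E q s \<and> \<not> E r q \<and> \<not> E r s \<and> \<not> E p s) \<or>
    (E r p \<and> E p s \<and> E s q \<and> \<not> E r s \<and> \<not> E r q \<and> \<not> E p q) \<or>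
    (E r q \<and> E q p \<and> E p s \<and> \<not> E r p \<and> \<not> E r s \<and> \<not> E q s) \<or>
    (E r q \<and> E q s \<and> E s p \<and> \<not> E r s \<and> \<not> E r p \<and> \<not> E q p) \<or>
    (E r s \<and> E s p \<and> E p q \<and> \<not> E r p \<and> \<not> E r q \<and> \<not> E s q) \<or>
    (E r s \<and> E s q \<and> E q p \<and> \<not> E r q \<and> \<not> E r p \<and> \<not> E s p) \<or>
    (E s p \<and> E p q \<and> E q r \<and> \<not> E s q \<and> \<not> E s r \<and> \<not> E p r) \<or>
    (E s p \<and> E p r \<and> E r q \<and> \<not> E s r \<and> \<not> E s q \<and> \<not> E p q) \<or>
    (E s q \<and> E q p \<and> E p r \<and> \<not> E s p \<and> \<not> E s r \<and> \<not> E q r) \<or>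
    (E s q \<and> E q r \<and> E r p \<and> \<not> E s r \<and> \<not> E s p \<and> \<not> E q p) \<or>
    (E s r \<and> E r p \<and> E p q \<and> \<not> E s p \<and> \<not> E s q \<and> \<not> E r q) \<or>
    (E s r \<and> E r q \<and> E q p \<and> \<not> E s q \<and> \<not> E s p \<and> \<not> E r p)"
  shows "\<exists>a b c d. {a,b,c,d} = {p,q,r,s} \<and> E a b \<and> E b c \<and> E c d \<and> \<not> E a c \<and> \<not> E a d \<and> \<not> E b d"
  using assms
  apply (elim disjE)
  subgoal by (rule exI[of _ p], rule exI[of _ q], rule exI[of _ r], rule exI[of _ s]) auto
  subgoal by (rule exI[of _ p], rule exI[of _ q], rule exI[of _ s], rule exI[of _ r]) auto
  subgoal by (rule exI[of _ p], rule exI[of _ r], rule exI[of _ q], rule exI[of _ s]) auto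
  subgoal by (rule exI[of _ p], rule exI[of _ r], rule exI[of _ s], rule exI[of _ q]) auto
  subgoal by (rule exI[of _ p], rule exI[of _ s], rule exI[of _ q], rule exI[of _ r]) auto
  subgoal by (rule exI[of _ p], rule exI[of _ s], rule exI[of _ r], rule exI[of _ q]) auto
  subgoal by (rule exI[of _ q], rule exI[of _ p], rule exI[of _ r], rule exI[of _ s]) auto
  subgoal by (rule exI[of _ q], rule exI[of _ p], rule exI[of _ s], rule exI[of _ r]) auto
  subgoal by (rule exI[of _ q], rule exI[of _ r], rule exI[of _ p], rule exI[of _ s]) auto
  subgoal by (rule exI[of _ q], rule exI[of _ r], rule exI[of _ s], rule exI[of _ p]) auto
  subgoal by (rule exI[of _ q], rule exI[of _ s], rule exI[of _ p], rule exI[of _ r]) auto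
  subgoal by (rule exI[of _ q], rule exI[of _ s], rule exI[of _ r], rule exI[of _ p]) auto
  subgoal by (rule exI[of _ r], rule exI[of _ p], rule exI[of _ q], rule exI[of _ s]) auto
  subgoal by (rule exI[of _ r], rule exI[of _ p], rule exI[of _ s], rule exI[of _ q]) auto
  subgoal by (rule exI[of _ r], rule exI[of _ q], rule exI[of _ p], rule exI[of _ s]) auto
  subgoal by (rule exI[of _ r], rule exI[of _ q], rule exI[of _ s], rule exI[of _ p]) auto
  subgoal by (rule exI[of _ r], rule exI[of _ s], rule exI[of _ p], rule exI[of _ q]) auto
  subgoal by (rule exI[of _ r], rule exI[of _ s], rule exI[of _ q], rule exI[of _ p]) auto
  subgoal by (rule exI[of _ s], rule exI[of _ p], rule exI[of _ q], rule exI[of _ r]) auto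
  subgoal by (rule exI[of _ s], rule exI[of _ p], rule exI[of _ r], rule exI[of _ q]) auto
  subgoal by (rule exI[of _ s], rule exI[of _ q], rule exI[of _ p], rule exI[of _ r]) auto
  subgoal by (rule exI[of _ s], rule exI[of _ q], rule exI[of _ r], rule exI[of _ p]) auto
  subgoal by (rule exI[of _ s], rule exI[of _ r], rule exI[of _ p], rule exI[of _ q]) auto
  subgoal by (rule exI[of _ s], rule exI[of _ r], rule exI[of _ q], rule exI[of _ p]) auto
  done

lemma card4: "card X = 4 \<Longrightarrow> \<exists>p q r s. X = {p,q,r,s} \<and> distinct [p,q,r,s]"
  by (simp add: numeral_eq_Suc card_Suc_eq) fastforce

lemma part1:
  assumes G: "graph V E" and A: "cond_A E" and B: "cond_B V E" and vV: "v \<in> V"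
    and c4: "card (nbhd E v) = 4"
    and c3: "card (induced_edges E (nbhd E v)) \<ge> 3"
  shows "\<exists>a b c d. nbhd_path E v a b c d"
proof -
  have sym: "\<forall>x y. E x y \<longrightarrow> E y x" and irr: "\<forall>x. \<not> E x x" using G unfolding graph_def by auto
  from c4 obtain p q r s where N: "nbhd E v = {p,q,r,s}" and dist: "distinct [p,q,r,s]"
    using card4 by metis
  have Ev: "E v p" "E v q" "E v r" "E v s" using N unfolding nbhd_def by auto
  have Ep: "E p v" "E q v" "E r v" "E s v" using Ev sym by auto
  have Au: "\<not> (nbhd E v \<subseteq> cnbhd E u)" if "E u v" for u
    using A that unfolding cond_A_def by blast
  have A1: "\<not> (E p q \<and> E p r \<and> E p s)" using Au[OF Ep(1)] N unfolding cnbhd_def nbhd_def by auto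
  have A2: "\<not> (E q p \<and> E q r \<and> E q s)" using Au[OF Ep(2)] N unfolding cnbhd_def nbhd_def by auto
  have A3: "\<not> (E r p \<and> E r q \<and> E r s)" using Au[OF Ep(3)] N unfolding cnbhd_def nbhd_def by auto
  have A4: "\<not> (E s p \<and> E s q \<and> E s r)" using Au[OF Ep(4)] N unfolding cnbhd_def nbhd_def by auto
  have C1: "\<not> (E p q \<and> E r s \<and> \<not> E p r \<and> E p s \<and> E q r \<and> \<not> E q s)"
  proof
    assume h: "E p q \<and> E r s \<and> \<not> E p r \<and> E p s \<and> E q r \<and> \<not> E q s"
    have n': "nbhd E v = {p,q,r,s}" using N by auto
    have d': "distinct [p,q,r,s]" using dist by auto
    show False using notB_C4[OF vV n' d' sym] h B by blast
  qed
  have C2: "\<not> (E p r \<and> E q s \<and> \<not> E p q \<and> E p s \<and> E r q \<and> \<not> E r s)"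
  proof
    assume h: "E p r \<and> E q s \<and> \<not> E p q \<and> E p s \<and> E r q \<and> \<not> E r s"
    have n': "nbhd E v = {p,r,q,s}" using N by auto
    have d': "distinct [p,r,q,s]" using dist by auto
    show False using notB_C4[OF vV n' d' sym] h B by blast
  qed
  have C3: "\<not> (E p q \<and> E s r \<and> \<not> E p s \<and> E p r \<and> E q s \<and> \<not> E q r)"
  proof
    assume h: "E p q \<and> E s r \<and> \<not> E p s \<and> E p r \<and> E q s \<and> \<not> E q r"
    have n': "nbhd E v = {p,q,s,r}" using N by auto
    have d': "distinct [p,q,s,r]" using dist by auto
    show False using notB_C4[OF vV n' d' sym] h B by blast
  qed
  have T1: "\<not> (E p q \<and> E q r \<and> E p r \<and> \<not> E p s \<and> \<not> E q s \<and> \<not> E r s)"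
  proof
    assume h: "E p q \<and> E q r \<and> E p r \<and> \<not> E p s \<and> \<not> E q s \<and> \<not> E r s"
    have n': "nbhd E v = {p,q,r,s}" using N by auto
    have d': "distinct [p,q,r,s]" using dist by auto
    show False using notB_T[OF vV n' d' sym] h B by blast
  qed
  have T2: "\<not> (E p q \<and> E q s \<and> E p s \<and> \<not> E p r \<and> \<not> E q r \<and> \<not> E s r)"
  proof
    assume h: "E p q \<and> E q s \<and> E p s \<and> \<not> E p r \<and> \<not> E q r \<and> \<not> E s r"
    have n': "nbhd E v = {p,q,s,r}" using N by auto
    have d': "distinct [p,q,s,r]" using dist by auto
    show False using notB_T[OF vV n' d' sym] h B by blast
  qed
  have T3: "\<not> (E p r \<and> E r s \<and> E p s \<and> \<not> E p q \<and> \<not> E r q \<and> \<not> E s q)"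
  proof
    assume h: "E p r \<and> E r s \<and> E p s \<and> \<not> E p q \<and> \<not> E r q \<and> \<not> E s q"
    have n': "nbhd E v = {p,r,s,q}" using N by auto
    have d': "distinct [p,r,s,q]" using dist by auto
    show False using notB_T[OF vV n' d' sym] h B by blast
  qed
  have T4: "\<not> (E q r \<and> E r s \<and> E q s \<and> \<not> E q p \<and> \<not> E r p \<and> \<not> E s p)"
  proof
    assume h: "E q r \<and> E r s \<and> E q s \<and> \<not> E q p \<and> \<not> E r p \<and> \<not> E s p"
    have n': "nbhd E v = {q,r,s,p}" using N by auto
    have d': "distinct [q,r,s,p]" using dist by auto
    show False using notB_T[OF vV n' d' sym] h B by blast
  qed
  have "(E p q \<and> E q r \<and> E r s \<and> \<not> E p r \<and> \<not> E p s \<and> \<not> E q s) \<or>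
    (E p q \<and> E q s \<and> E s r \<and> \<not> E p s \<and> \<not> E p r \<and> \<not> E q r) \<or>
    (E p r \<and> E r q \<and> E q s \<and> \<not> E p q \<and> \<not> E p s \<and> \<not> E r s) \<or>
    (E p r \<and> E r s \<and> E s q \<and> \<not> E p s \<and> \<not> E p q \<and> \<not> E r q) \<or>
    (E p s \<and> E s q \<and> E q r \<and> \<not> E p q \<and> \<not> E p r \<and> \<not> E s r) \<or>
    (E p s \<and> E s r \<and> E r q \<and> \<not> E p r \<and> \<not> E p q \<and> \<not> E s q) \<or>
    (E q p \<and> E p r \<and> E r s \<and> \<not> E q r \<and> \<not> E q s \<and> \<not> E p s) \<or>
    (E q p \<and> E p s \<and> E s r \<and> \<not> E q s \<and> \<not> E q r \<and> \<not> E p r) \<or>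
    (E q r \<and> E r p \<and> E p s \<and> \<not> E q p \<and> \<not> E q s \<and> \<not> E r s) \<or>
    (E q r \<and> E r s \<and> E s p \<and> \<not> E q s \<and> \<not> E q p \<and> \<not> E r p) \<or>
    (E q s \<and> E s p \<and> E p r \<and> \<not> E q p \<and> \<not> E q r \<and> \<not> E s r) \<or>
    (E q s \<and> E s r \<and> E r p \<and> \<not> E q r \<and> \<not> E q p \<and> \<not> E s p) \<or>
    (E r p \<and> E p q \<and> E q s \<and> \<not> E r q \<and> \<not> E r s \<and> \<not> E p s) \<or>
    (E r p \<and> E p s \<and> E s q \<and> \<not> E r s \<and> \<not> E r q \<and> \<not> E p q) \<or>
    (E r q \<and> E q p \<and> E p s \<and> \<not> E r p \<and> \<not> E r s \<and> \<not> E q s) \<or>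
    (E r q \<and> E q s \<and> E s p \<and> \<not> E r s \<and> \<not> E r p \<and> \<not> E q p) \<or>
    (E r s \<and> E s p \<and> E p q \<and> \<not> E r p \<and> \<not> E r q \<and> \<not> E s q) \<or>
    (E r s \<and> E s q \<and> E q p \<and> \<not> E r q \<and> \<not> E r p \<and> \<not> E s p) \<or>
    (E s p \<and> E p q \<and> E q r \<and> \<not> E s q \<and> \<not> E s r \<and> \<not> E p r) \<or>
    (E s p \<and> E p r \<and> E r q \<and> \<not> E s r \<and> \<not> E s q \<and> \<not> E p q) \<or>
    (E s q \<and> E q p \<and> E p r \<and> \<not> E s p \<and> \<not> E s r \<and> \<not> E q r) \<or>
    (E s q \<and> E q r \<and> E r p \<and> \<not> E s r \<and> \<not> E s p \<and> \<not> E q p) \<or>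
    (E s r \<and> E r p \<and> E p q \<and> \<not> E s p \<and> \<not> E s q \<and> \<not> E r q) \<or>
    (E s r \<and> E r q \<and> E q p \<and> \<not> E s q \<and> \<not> E s p \<and> \<not> E r p)"
    by (rule four_cases[OF sym irr dist A1 A2 A3 A4 C1 C2 C3 T1 T2 T3 T4]) (use c3 N in simp)
  from disj_ex[OF this] obtain a b c d where
    abcd: "{a,b,c,d} = {p,q,r,s}" "E a b" "E b c" "E c d" "\<not> E a c" "\<not> E a d" "\<not> E b d" by blast
  have dd: "distinct [a,b,c,d]"
  proof -
    have "card {a,b,c,d} = 4" using abcd(1) dist by simp
    then show ?thesis by (auto simp: card_insert_if split: if_splits)
  qed
  show ?thesis unfolding nbhd_path_def
    by (rule exI[of _ a], rule exI[of _ b], rule exI[of _ c], rule exI[of _ d]) (use abcd N dd in auto)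
qed



lemma cover_red:
  assumes C: "C' \<subseteq> V - {v}"
    and hG: "\<forall>x y. E x y \<and> x \<noteq> v \<and> y \<noteq> v \<longrightarrow> x \<in> C' \<or> y \<in> C'"
    and hN: "\<forall>x\<in>{a,b,c,d}. \<forall>y\<in>{a,b,c,d}. x \<noteq> y \<longrightarrow> x \<in> C' \<or> y \<in> C'"
    and hab: "\<forall>x\<in>{a,b}. \<forall>y. E d y \<and> y \<noteq> v \<longrightarrow> x \<in> C' \<or> y \<in> C'"
    and hcd: "\<forall>x\<in>{c,d}. \<forall>y. E a y \<and> y \<noteq> v \<longrightarrow> x \<in> C' \<or> y \<in> C'"
    and N: "nbhd E v = {a,b,c,d}"
  shows "vertex_cover (V - {v}) (reduced_edges E v a b c d) C'"
  unfolding vertex_cover_def reduced_edges_def new_pairs_def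
proof (intro conjI C allI impI)
  fix x y
  assume h: "x \<noteq> v \<and> y \<noteq> v \<and> (E x y \<or>
     (x \<noteq> y \<and> (x \<in> nbhd E v \<and> y \<in> nbhd E v \<or> x \<in> {a, b} \<and> y \<in> nbhd E d \<or> x \<in> {c, d} \<and> y \<in> nbhd E a)) \<or>
     (y \<noteq> x \<and> (y \<in> nbhd E v \<and> x \<in> nbhd E v \<or> y \<in> {a, b} \<and> x \<in> nbhd E d \<or> y \<in> {c, d} \<and> x \<in> nbhd E a)))"
  show "x \<in> C' \<or> y \<in> C'"
    using h hG hN hab hcd N unfolding nbhd_def by blast
qed

lemma part2:
  assumes G: "graph V E" and vV: "v \<in> V" and P: "nbhd_path E v a b c d"
  shows "has_vc V E k \<longleftrightarrow> has_vc (V - {v}) (reduced_edges E v a b c d) k"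
proof -
  have sym: "\<forall>x y. E x y \<longrightarrow> E y x" and irr: "\<forall>x. \<not> E x x" and inV: "\<forall>x y. E x y \<longrightarrow> x \<in> V \<and> y \<in> V"
    and fin: "finite V" using G unfolding graph_def by auto
  have N: "nbhd E v = {a,b,c,d}" and dist: "distinct [a,b,c,d]"
    and pe: "E a b" "E b c" "E c d" "\<not> E a c" "\<not> E a d" "\<not> E b d"
    using P unfolding nbhd_path_def by auto
  have Ev: "E v a" "E v b" "E v c" "E v d" using N unfolding nbhd_def by auto
  have nv: "a \<noteq> v" "b \<noteq> v" "c \<noteq> v" "d \<noteq> v" using Ev irr by auto
  have abcdV: "a \<in> V" "b \<in> V" "c \<in> V" "d \<in> V" using Ev inV by auto
  show ?thesis
  proof
    assume "has_vc V E k"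
    then obtain C where vc: "vertex_cover V E C" and ck: "int (card C) \<le> k" unfolding has_vc_def by blast
    have CV: "C \<subseteq> V" and cov: "\<forall>x y. E x y \<longrightarrow> x \<in> C \<or> y \<in> C" using vc unfolding vertex_cover_def by auto
    have finC: "finite C" using CV fin finite_subset by blast
    show "has_vc (V - {v}) (reduced_edges E v a b c d) k"
    proof (cases "v \<in> C")
      case False
      then have in4: "a \<in> C" "b \<in> C" "c \<in> C" "d \<in> C" using cov Ev by blast+
      have "vertex_cover (V - {v}) (reduced_edges E v a b c d) C"
        by (rule cover_red[OF _ _ _ _ _ N]) (use CV False cov in4 in auto)
      then show ?thesis unfolding has_vc_def using ck by blast
    next
      case True
      have "\<exists>x\<in>{a,b,c,d}. vertex_cover (V - {v}) (reduced_edges E v a b c d) (insert x (C - {v}))"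
      proof -
        have nb: "y \<in> C" if "z \<notin> C" "E z y" for z y using cov that by blast
        have pc: "a \<in> C \<or> b \<in> C" "b \<in> C \<or> c \<in> C" "c \<in> C \<or> d \<in> C" using cov pe by blast+
        have sub: "insert x (C - {v}) \<subseteq> V - {v}" if "x \<in> {a,b,c,d}" for x
          using that CV abcdV nv by auto
        have hG: "\<forall>x y. E x y \<and> x \<noteq> v \<and> y \<noteq> v \<longrightarrow> x \<in> insert z (C - {v}) \<or> y \<in> insert z (C - {v})" for z
          using cov by blast
        show ?thesis
        proof (cases "a \<in> C")
          case aC: True
          show ?thesis
          proof (cases "d \<in> C")
            case dC: True
            show ?thesis
            proof (cases "b \<in> C")
              case bC: True
              show ?thesis
                by (rule bexI[of _ c], rule cover_red[OF sub hG _ _ _ N]) (use aC bC dC nv nb in auto)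
            next
              case bC: False
              show ?thesis
                by (rule bexI[of _ b], rule cover_red[OF sub hG _ _ _ N]) (use aC bC dC pc nv nb in auto)
            qed
          next
            case dC: False
            show ?thesis
            proof (cases "b \<in> C")
              case bC: True
              show ?thesis
                by (rule bexI[of _ d], rule cover_red[OF sub hG _ _ _ N]) (use aC bC dC pc nv nb in auto)
            next
              case bC: False
              show ?thesis
                by (rule bexI[of _ d], rule cover_red[OF sub hG _ _ _ N]) (use aC bC dC pc nv nb in auto)
            qed
          qed
        next
          case aC: False
          show ?thesis
            by (rule bexI[of _ a], rule cover_red[OF sub hG _ _ _ N]) (use aC pc nv nb dist in auto)
        qed
      qed
      then obtain x where x: "x \<in> {a,b,c,d}" and vcx: "vertex_cover (V - {v}) (reduced_edges E v a b c d) (insert x (C - {v}))"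
        by blast
      have "card (insert x (C - {v})) \<le> card C"
        using True finC by (simp add: card_insert_if card_Diff_singleton) (metis Suc_pred card_gt_0_iff empty_iff le_refl)
      then show ?thesis unfolding has_vc_def using vcx ck by force
    qed
  next
    assume "has_vc (V - {v}) (reduced_edges E v a b c d) k"
    then obtain C where vc: "vertex_cover (V - {v}) (reduced_edges E v a b c d) C" and ck: "int (card C) \<le> k"
      unfolding has_vc_def by blast
    have CV: "C \<subseteq> V - {v}" and cov: "\<forall>x y. reduced_edges E v a b c d x y \<longrightarrow> x \<in> C \<or> y \<in> C"
      using vc unfolding vertex_cover_def by auto
    have finC: "finite C" using CV fin finite_subset by blast
    have covG: "x \<in> C \<or> y \<in> C" if "E x y" "x \<noteq> v" "y \<noteq> v" for x y
      using cov that unfolding reduced_edges_def by blast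
    have covN: "x \<in> C \<or> y \<in> C" if "x \<in> {a,b,c,d}" "y \<in> {a,b,c,d}" "x \<noteq> y" for x y
      using cov that nv N unfolding reduced_edges_def new_pairs_def by auto
    have pe': "\<not> E d a" "\<not> E d b" using pe sym by blast+
    have covab: "x \<in> C \<or> y \<in> C" if "x \<in> {a,b}" "E d y" "y \<noteq> v" for x y
      using cov that nv pe pe' unfolding reduced_edges_def new_pairs_def nbhd_def by auto
    have covcd: "x \<in> C \<or> y \<in> C" if "x \<in> {c,d}" "E a y" "y \<noteq> v" for x y
      using cov that nv pe unfolding reduced_edges_def new_pairs_def nbhd_def by auto
    have swap: "has_vc V E k" if z: "z \<in> C" and vcz: "vertex_cover V E (insert v (C - {z}))" for z
    proof -
      have "v \<notin> C" using CV by auto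
      then have "card (insert v (C - {z})) = card C" using z finC
        by (simp add: card_Diff_singleton) (metis Suc_pred card_gt_0_iff empty_iff)
      then show ?thesis unfolding has_vc_def using vcz ck by force
    qed
    have vsub: "insert v (C - {z}) \<subseteq> V" for z using CV vV by auto
    show "has_vc V E k"
    proof (cases "a \<in> C \<and> b \<in> C \<and> c \<in> C \<and> d \<in> C")
      case True
      have "vertex_cover V E C" unfolding vertex_cover_def
      proof (intro conjI allI impI)
        show "C \<subseteq> V" using CV by auto
        fix x y assume "E x y"
        moreover have "E v y \<Longrightarrow> y \<in> {a,b,c,d}" "E x v \<Longrightarrow> x \<in> {a,b,c,d}"
          using N sym unfolding nbhd_def by auto
        ultimately show "x \<in> C \<or> y \<in> C" using covG True irr by (cases "x = v"; cases "y = v") auto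
      qed
      then show ?thesis unfolding has_vc_def using ck by blast
    next
      case False
      have edv: "E x y \<Longrightarrow> x = v \<Longrightarrow> y \<in> {a,b,c,d}" for x y using N unfolding nbhd_def by auto
      show ?thesis
      proof (cases "a \<in> C")
        case aC: False
        have dC: "d \<in> C" using covN[of a d] aC dist by auto
        show ?thesis
        proof (rule swap[OF dC])
          show "vertex_cover V E (insert v (C - {d}))" unfolding vertex_cover_def
          proof (intro conjI vsub allI impI)
            fix x y assume e: "E x y"
            show "x \<in> insert v (C - {d}) \<or> y \<in> insert v (C - {d})"
              using covG[OF e] covG[OF e[THEN sym[rule_format]]] covab[of a x] covab[of a y] covN[of a]
                  covcd covN e sym irr aC pe by auto
          qed
        qed
      next
        case aC: True
        show ?thesis
        proof (cases "d \<in> C")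
          case dC: False
        show ?thesis
        proof (rule swap[OF aC])
          show "vertex_cover V E (insert v (C - {a}))" unfolding vertex_cover_def
          proof (intro conjI vsub allI impI)
            fix x y assume e: "E x y"
            show "x \<in> insert v (C - {a}) \<or> y \<in> insert v (C - {a})"
              using covG[OF e] covG[OF e[THEN sym[rule_format]]] covcd[of d x] covcd[of d y] aC dC covN e sym irr pe dist by auto
          qed
        qed
        next
          case dC: True
          show ?thesis
          proof (cases "b \<in> C")
            case bC: False
        show ?thesis
        proof (rule swap[OF dC])
          show "vertex_cover V E (insert v (C - {d}))" unfolding vertex_cover_def
          proof (intro conjI vsub allI impI)
            fix x y assume e: "E x y"
            show "x \<in> insert v (C - {d}) \<or> y \<in> insert v (C - {d})"
              using covG[OF e] covG[OF e[THEN sym[rule_format]]] covab[of b x] covab[of b y] aC dC bC covN e sym irr pe dist by auto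
          qed
        qed
          next
            case bC: True
            have cC: "c \<notin> C" using False aC bC dC by blast
        show ?thesis
        proof (rule swap[OF aC])
          show "vertex_cover V E (insert v (C - {a}))" unfolding vertex_cover_def
          proof (intro conjI vsub allI impI)
            fix x y assume e: "E x y"
            show "x \<in> insert v (C - {a}) \<or> y \<in> insert v (C - {a})"
              using covG[OF e] covG[OF e[THEN sym[rule_format]]] covcd[of c x] covcd[of c y] aC dC bC cC covN e sym irr pe dist by auto
          qed
        qed
          qed
        qed
      qed
    qed
  qed
qed


theorem proposition7:
  fixes V :: "'a set" and E :: "'a \<Rightarrow> 'a \<Rightarrow> bool" and k :: int and v :: 'a
  assumes "graph V E"
    and "cond_A E"
    and "cond_B V E"
    and "v \<in> V"
    and "card (nbhd E v) = 4"
    and "card (induced_edges E (nbhd E v)) \<ge> 3"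
  shows "(\<exists>a b c d. nbhd_path E v a b c d)
    \<and> (\<forall>a b c d. nbhd_path E v a b c d \<longrightarrow>
          (has_vc V E k \<longleftrightarrow> has_vc (V - {v}) (reduced_edges E v a b c d) k))"
  using part1[OF assms] part2[OF assms(1) assms(4)] by blast

end
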